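(* Let $G$ be a Lindelöf Hausdorff topological group whose underlying space is basically disconnected. Then either $G$ is a $P$-space, or $G$ has a nondiscrete topological quotient group $G/N$ (with $N$ a closed normal subgroup) of countable pseudocharacter which contains an open subgroup that is Boolean and basically disconnected.
   Context: All spaces are Tychonoff. A space is basically disconnected if the closure of every cozero set in it is open. A space is a $P$-space if every $G_\delta$-subset is open. For a topological group, countable pseudocharacter means the identity element is a $G_\delta$-set. A group is Boolean if every element has order at most $2$. The quotient $G/N$ carries the quotient topology. *)

theory Defs
  imports "HOL-Analysis.Analysis" "HOL-Algebra.Algebra"
begin

definition topological_group :: "('a, 'b) monoid_scheme \<Rightarrow> 'a topology \<Rightarrow> bool" where
  "topological_group G T \<longleftrightarrow> group G \<and> topspace T = carrier G \<and>
     continuous_map (prod_topology T T) T (\<lambda>p. fst p \<otimes>\<^bsub>G\<^esub> snd p) \<and>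
     continuous_map T T (\<lambda>x. inv\<^bsub>G\<^esub> x)"

definition cozero_set :: "'a topology \<Rightarrow> 'a set \<Rightarrow> bool" where
  "cozero_set Xt S \<longleftrightarrow> (\<exists>g. continuous_map Xt euclideanreal g \<and> S = {x \<in> topspace Xt. g x \<noteq> (0::real)})"

definition basically_disconnected :: "'a topology \<Rightarrow> bool" where
  "basically_disconnected Xt \<longleftrightarrow> (\<forall>C. cozero_set Xt C \<longrightarrow> openin Xt (Xt closure_of C))"

definition gdelta_in :: "'a topology \<Rightarrow> 'a set \<Rightarrow> bool" where
  "gdelta_in Xt S \<longleftrightarrow> (\<exists>\<F>. countable \<F> \<and> \<F> \<noteq> {} \<and> (\<forall>U\<in>\<F>. openin Xt U) \<and> S = \<Inter>\<F>)"

definition P_space :: "'a topology \<Rightarrow> bool" where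
  "P_space Xt \<longleftrightarrow> (\<forall>S. gdelta_in Xt S \<longrightarrow> openin Xt S)"

definition countable_pseudocharacter :: "('a, 'b) monoid_scheme \<Rightarrow> 'a topology \<Rightarrow> bool" where
  "countable_pseudocharacter G T \<longleftrightarrow> gdelta_in T {\<one>\<^bsub>G\<^esub>}"

definition boolean_group :: "('a, 'b) monoid_scheme \<Rightarrow> bool" where
  "boolean_group G \<longleftrightarrow> (\<forall>x\<in>carrier G. x \<otimes>\<^bsub>G\<^esub> x = \<one>\<^bsub>G\<^esub>)"

definition quotient_topology :: "'a topology \<Rightarrow> ('a \<Rightarrow> 'c) \<Rightarrow> 'c topology" where
  "quotient_topology Xt f = topology (\<lambda>U. U \<subseteq> f ` topspace Xt \<and> openin Xt {x \<in> topspace Xt. f x \<in> U})"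

definition quotient_group_topology :: "('a, 'b) monoid_scheme \<Rightarrow> 'a topology \<Rightarrow> 'a set \<Rightarrow> 'a set topology" where
  "quotient_group_topology G T N = quotient_topology T (\<lambda>x. N #>\<^bsub>G\<^esub> x)"

definition discrete_space :: "'a topology \<Rightarrow> bool" where
  "discrete_space Xt \<longleftrightarrow> (\<forall>x\<in>topspace Xt. openin Xt {x})"

end

theory Submission
  imports Defs
begin


locale tgrp = group G for G :: "('a,'b) monoid_scheme" (structure) +
  fixes T :: "'a topology"
  assumes top: "topspace T = carrier G"
    and mcont: "continuous_map (prod_topology T T) T (\<lambda>p. fst p \<otimes> snd p)"
    and icont: "continuous_map T T (\<lambda>x. inv x)"

lemma tgrpI: "topological_group G T \<Longrightarrow> tgrp G T"
  unfolding topological_group_def tgrp_def tgrp_axioms_def by auto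

context tgrp begin

lemma cont_mult:
  assumes "continuous_map Z T f" "continuous_map Z T g"
  shows "continuous_map Z T (\<lambda>x. f x \<otimes> g x)"
  using continuous_map_compose[OF continuous_map_pairedI[OF assms] mcont] by (simp add: o_def)

lemma cont_inv:
  assumes "continuous_map Z T f"
  shows "continuous_map Z T (\<lambda>x. inv (f x))"
  using continuous_map_compose[OF assms icont] by (simp add: o_def)

lemma cont_const: "a \<in> carrier G \<Longrightarrow> continuous_map Z T (\<lambda>x. a)"
  by (simp add: top)

lemma cont_id: "continuous_map T T (\<lambda>x. x)"
  by simp

lemma open_pre:
  assumes "continuous_map T T f" "openin T U"
  shows "openin T {x \<in> carrier G. f x \<in> U}"
  using openin_continuous_map_preimage[OF assms] by (simp add: top)

lemma closed_pre:
  assumes "continuous_map T T f" "closedin T U"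
  shows "closedin T {x \<in> carrier G. f x \<in> U}"
  using closedin_continuous_map_preimage[OF assms] by (simp add: top)

lemma nbhd2:
  assumes "continuous_map (prod_topology T T) T \<phi>" "openin T W" "\<phi> (a,b) \<in> W"
    "a \<in> carrier G" "b \<in> carrier G"
  shows "\<exists>U V. openin T U \<and> openin T V \<and> a \<in> U \<and> b \<in> V \<and> (\<forall>u\<in>U. \<forall>v\<in>V. \<phi> (u,v) \<in> W)"
proof -
  have "openin (prod_topology T T) {p \<in> topspace (prod_topology T T). \<phi> p \<in> W}"
    using openin_continuous_map_preimage[OF assms(1,2)] .
  moreover have "(a,b) \<in> {p \<in> topspace (prod_topology T T). \<phi> p \<in> W}"
    using assms(3-5) top by simp
  ultimately obtain U V where "openin T U" "openin T V" "a \<in> U" "b \<in> V"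
     "U \<times> V \<subseteq> {p \<in> topspace (prod_topology T T). \<phi> p \<in> W}"
    unfolding openin_prod_topology_alt by meson
  then show ?thesis by (intro exI[of _ U] exI[of _ V]) auto
qed

lemma nbhd1:
  assumes "continuous_map (prod_topology T T) T \<phi>" "openin T W" "\<phi> (\<one>,\<one>) \<in> W"
  shows "\<exists>V. openin T V \<and> \<one> \<in> V \<and> (\<forall>u\<in>V. \<forall>v\<in>V. \<phi> (u,v) \<in> W)"
proof -
  obtain U V where "openin T U" "openin T V" "\<one> \<in> U" "\<one> \<in> V" "\<forall>u\<in>U. \<forall>v\<in>V. \<phi> (u,v) \<in> W"
    using nbhd2[OF assms] by auto
  then show ?thesis by (intro exI[of _ "U \<inter> V"]) auto
qed

lemma open_subset: "openin T U \<Longrightarrow> U \<subseteq> carrier G"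
  using openin_subset top by blast

lemma closed_subset: "closedin T U \<Longrightarrow> U \<subseteq> carrier G"
  using closedin_subset top by blast

lemma ltrans_open:
  assumes "openin T U" "a \<in> carrier G"
  shows "openin T {x \<in> carrier G. a \<otimes> x \<in> U}"
  by (rule open_pre[OF cont_mult[OF cont_const[OF assms(2)] cont_id] assms(1)])

lemma inv_open:
  assumes "openin T U"
  shows "openin T {x \<in> carrier G. inv x \<in> U}"
  by (rule open_pre[OF icont assms(1)])

lemma regular: "regular_space T"
  unfolding regular_space
proof (intro allI impI)
  fix C a assume H: "closedin T C \<and> a \<in> topspace T - C"
  then have C: "closedin T C" and a: "a \<in> topspace T" "a \<notin> C" by auto
  have aG: "a \<in> carrier G" using a top by auto
  let ?W = "topspace T - C"
  have Wo: "openin T ?W" using C by auto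
  have phic: "continuous_map (prod_topology T T) T (\<lambda>p. a \<otimes> (fst p \<otimes> snd p))"
    by (intro cont_mult cont_const aG mcont)
  have "a \<otimes> (fst (\<one>,\<one>) \<otimes> snd (\<one>,\<one>)) \<in> ?W" using aG a by simp
  then obtain V where V: "openin T V" "\<one> \<in> V" "\<And>u v. u\<in>V \<Longrightarrow> v\<in>V \<Longrightarrow> a \<otimes> (u \<otimes> v) \<in> ?W"
    using nbhd1[OF phic Wo] by force
  have VG: "V \<subseteq> carrier G" using V open_subset by auto
  let ?U = "{x \<in> carrier G. inv a \<otimes> x \<in> V}"
  have Uo: "openin T ?U" using ltrans_open V aG by auto
  have aU: "a \<in> ?U" using aG V by simp
  have "T closure_of ?U \<subseteq> ?W"
  proof
    fix y assume y: "y \<in> T closure_of ?U"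
    hence yG: "y \<in> carrier G" using closure_of_subset_topspace top by fastforce
    let ?O = "{z \<in> carrier G. inv z \<otimes> y \<in> V}"
    have "openin T ?O"
      by (intro open_pre V cont_mult cont_inv cont_id cont_const yG)
    moreover have "y \<in> ?O" using yG V by simp
    ultimately obtain z where z: "z \<in> ?U" "z \<in> ?O" using y unfolding in_closure_of by meson
    have zG: "z \<in> carrier G" using z by simp
    have "y = a \<otimes> ((inv a \<otimes> z) \<otimes> (inv z \<otimes> y))"
      using zG yG aG by (simp add: m_assoc[symmetric] r_inv)
    also have "\<dots> \<in> ?W" using V(3) z by simp
    finally show "y \<in> ?W" .
  qed
  then have "disjnt C (T closure_of ?U)" by (auto simp: disjnt_def)
  then show "\<exists>U. openin T U \<and> a \<in> U \<and> disjnt C (T closure_of U)"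
    using Uo aU by blast
qed

end


lemma cozero_subset: "cozero_set Xt S \<Longrightarrow> S \<subseteq> topspace Xt"
  unfolding cozero_set_def by auto

lemma cozero_open: assumes "cozero_set Xt S" shows "openin Xt S"
proof -
  obtain g where g: "continuous_map Xt euclideanreal g" "S = {x \<in> topspace Xt. g x \<noteq> 0}"
    using assms unfolding cozero_set_def by blast
  have "openin Xt {x \<in> topspace Xt. g x \<in> -{0}}"
    by (rule openin_continuous_map_preimage[OF g(1)]) auto
  then show ?thesis using g(2) by simp
qed

lemma cozero_Un:
  assumes "cozero_set Xt S" "cozero_set Xt R" shows "cozero_set Xt (S \<union> R)"
proof -
  obtain g where g: "continuous_map Xt euclideanreal g" "S = {x \<in> topspace Xt. g x \<noteq> 0}"
    using assms unfolding cozero_set_def by blast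
  obtain h where h: "continuous_map Xt euclideanreal h" "R = {x \<in> topspace Xt. h x \<noteq> 0}"
    using assms unfolding cozero_set_def by blast
  have c: "continuous_map Xt euclideanreal (\<lambda>x. \<bar>g x\<bar> + \<bar>h x\<bar>)"
    by (intro continuous_intros g(1) h(1))
  have "S \<union> R = {x \<in> topspace Xt. \<bar>g x\<bar> + \<bar>h x\<bar> \<noteq> 0}"
    using g(2) h(2) by auto
  then show ?thesis unfolding cozero_set_def using c by blast
qed

lemma cozero_Int:
  assumes "cozero_set Xt S" "cozero_set Xt R" shows "cozero_set Xt (S \<inter> R)"
proof -
  obtain g where g: "continuous_map Xt euclideanreal g" "S = {x \<in> topspace Xt. g x \<noteq> 0}"
    using assms unfolding cozero_set_def by blast
  obtain h where h: "continuous_map Xt euclideanreal h" "R = {x \<in> topspace Xt. h x \<noteq> 0}"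
    using assms unfolding cozero_set_def by blast
  have c: "continuous_map Xt euclideanreal (\<lambda>x. g x * h x)"
    by (intro continuous_intros g(1) h(1))
  have "S \<inter> R = {x \<in> topspace Xt. g x * h x \<noteq> 0}"
    using g(2) h(2) by auto
  then show ?thesis unfolding cozero_set_def using c by blast
qed

lemma clopen_indicator_cont:
  assumes "closedin Xt S" "openin Xt S"
  shows "continuous_map Xt euclideanreal (\<lambda>x. if x \<in> S then 1 else 0)"
  unfolding continuous_map_def
proof (intro conjI allI impI)
  show "(\<lambda>x. if x \<in> S then 1 else 0) \<in> topspace Xt \<rightarrow> topspace euclideanreal" by simp
  fix U :: "real set" assume "openin euclideanreal U"
  have e: "{x \<in> topspace Xt. (if x \<in> S then 1 else 0) \<in> U} =
     (if (1::real) \<in> U then S else {}) \<union> (if (0::real) \<in> U then topspace Xt - S else {})"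
    using closedin_subset[OF assms(1)] by auto
  have "openin Xt (topspace Xt - S)" using assms(1) by auto
  then show "openin Xt {x \<in> topspace Xt. (if x \<in> S then 1 else 0) \<in> U}"
    unfolding e using assms(2) by auto
qed

lemma clopen_cozero:
  assumes "closedin Xt S" "openin Xt S" shows "cozero_set Xt S"
proof -
  have "S = {x \<in> topspace Xt. (if x \<in> S then 1 else 0::real) \<noteq> 0}"
    using closedin_subset[OF assms(1)] by auto
  then show ?thesis unfolding cozero_set_def using clopen_indicator_cont[OF assms] by blast
qed

lemma cozero_preimage:
  assumes "continuous_map Xt Yt f" "cozero_set Yt S"
  shows "cozero_set Xt {x \<in> topspace Xt. f x \<in> S}"
proof -
  obtain g where g: "continuous_map Yt euclideanreal g" "S = {x \<in> topspace Yt. g x \<noteq> 0}"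
    using assms unfolding cozero_set_def by blast
  have c: "continuous_map Xt euclideanreal (g \<circ> f)"
    by (rule continuous_map_compose[OF assms(1) g(1)])
  have "{x \<in> topspace Xt. f x \<in> S} = {x \<in> topspace Xt. (g \<circ> f) x \<noteq> 0}"
    using g(2) continuous_map_image_subset_topspace[OF assms(1)] by auto
  then show ?thesis unfolding cozero_set_def using c by blast
qed

lemma cozero_compreg:
  assumes "completely_regular_space Xt" "openin Xt U" "x \<in> U"
  shows "\<exists>S. cozero_set Xt S \<and> x \<in> S \<and> S \<subseteq> U"
proof -
  have "closedin Xt (topspace Xt - U)" using assms(2) by auto
  moreover have "x \<in> topspace Xt - (topspace Xt - U)" using assms openin_subset by auto
  ultimately obtain f :: "'a \<Rightarrow> real" where f: "continuous_map Xt (top_of_set {0..1}) f"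
     "f x = 0" "f ` (topspace Xt - U) \<subseteq> {1}"
    using assms(1) unfolding completely_regular_space_def by meson
  have c: "continuous_map Xt euclideanreal f"
    using f(1) continuous_map_in_subtopology by blast
  have c2: "continuous_map Xt euclideanreal (\<lambda>y. 1 - f y)"
    by (intro continuous_intros c)
  let ?S = "{y \<in> topspace Xt. 1 - f y \<noteq> 0}"
  have "cozero_set Xt ?S" unfolding cozero_set_def using c2 by blast
  moreover have "x \<in> ?S" using f(2) assms openin_subset by auto
  moreover have "?S \<subseteq> U" using f(3) by auto
  ultimately show ?thesis by blast
qed


lemma tail_bound:
  fixes h :: "nat \<Rightarrow> real"
  assumes "\<And>n. 0 \<le> h n" "\<And>n. h n \<le> 1"
  shows "summable (\<lambda>n. (1/2)^n * h n)"
    and "\<bar>(\<Sum>n<k. (1/2)^n * h n) - (suminf (\<lambda>n. (1/2)^n * h n))\<bar> \<le> 2 * (1/2)^k"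
proof -
  have sg: "summable (\<lambda>n. (1/2::real)^n)" by (rule summable_geometric) simp
  show s: "summable (\<lambda>n. (1/2)^n * h n)"
    by (rule summable_comparison_test[OF _ sg]) (use assms in \<open>auto intro!: exI[of _ 0] mult_le_one\<close>)
  have sp: "(suminf (\<lambda>n. (1/2)^n * h n)) = (suminf (\<lambda>n. (1/2)^(n+k) * h (n+k))) + (\<Sum>n<k. (1/2)^n * h n)"
    by (rule suminf_split_initial_segment[OF s])
  have st: "summable (\<lambda>n. (1/2::real)^(n+k) * h (n+k))"
    using summable_ignore_initial_segment[OF s, of k] by simp
  have sg2: "summable (\<lambda>n. (1/2::real)^k * (1/2)^n)"
    using summable_mult[OF sg] by blast
  have le: "(suminf (\<lambda>n. (1/2::real)^(n+k) * h (n+k))) \<le> (suminf (\<lambda>n. (1/2)^k * (1/2)^n))"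
    by (rule suminf_le[OF _ st sg2]) (use assms in \<open>auto simp: power_add intro!: mult_le_one\<close>)
  have ge: "0 \<le> (suminf (\<lambda>n. (1/2::real)^(n+k) * h (n+k)))"
    by (rule suminf_nonneg[OF st]) (use assms in auto)
  have "(suminf (\<lambda>n. (1/2::real)^k * (1/2)^n)) = (1/2)^k * (suminf (\<lambda>n. (1/2)^n))"
    by (rule suminf_mult[OF sg])
  also have "(suminf (\<lambda>n. (1/2::real)^n)) = 2" using suminf_geometric[of "1/2::real"] by simp
  finally show "\<bar>(\<Sum>n<k. (1/2)^n * h n) - (suminf (\<lambda>n. (1/2)^n * h n))\<bar> \<le> 2 * (1/2)^k"
    using sp le ge by simp
qed

lemma cozero_countable_Union:
  assumes "\<And>n::nat. cozero_set Xt (S n)"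
  shows "cozero_set Xt (\<Union>n. S n)"
proof -
  obtain g where g: "\<And>n. continuous_map Xt euclideanreal (g n)" "\<And>n. S n = {x \<in> topspace Xt. g n x \<noteq> 0}"
    using assms unfolding cozero_set_def by metis
  define h where "h n x = min 1 \<bar>g n x\<bar>" for n x
  have h01: "0 \<le> h n x" "h n x \<le> 1" for n x unfolding h_def by auto
  have hc: "continuous_map Xt euclideanreal (h n)" for n
    unfolding h_def by (intro continuous_intros g(1))
  define F where "F x = (suminf (\<lambda>n. (1/2)^n * h n x))" for x
  define P where "P k x = (\<Sum>n<k. (1/2)^n * h n x)" for k x
  have Pc: "\<forall>\<^sub>F k in sequentially. continuous_map Xt Met_TC.mtopology (P k)"
    unfolding P_def mtopology_is_euclidean
    by (intro always_eventually allI continuous_intros hc) auto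
  have lim: "((\<lambda>k. 2 * (1/2::real)^k) \<longlongrightarrow> 0) sequentially"
    using tendsto_mult_right_zero[OF LIMSEQ_power_zero[of "1/2::real"], of 2] by simp
  have Fc: "continuous_map Xt Met_TC.mtopology F"
  proof (rule Met_TC.continuous_map_uniform_limit[OF Pc])
    fix e :: real assume e: "0 < e"
    have "\<forall>\<^sub>F k in sequentially. 2 * (1/2::real)^k < e" using order_tendstoD(2)[OF lim e] .
    then show "\<forall>\<^sub>F k in sequentially. \<forall>x\<in>topspace Xt. F x \<in> UNIV \<and> dist (P k x) (F x) < e"
    proof (rule eventually_mono)
      fix k assume k: "2 * (1/2::real)^k < e"
      show "\<forall>x\<in>topspace Xt. F x \<in> UNIV \<and> dist (P k x) (F x) < e"
      proof
        fix x
        have "\<bar>P k x - F x\<bar> \<le> 2 * (1/2)^k"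
          unfolding P_def F_def by (rule tail_bound(2)) (use h01 in auto)
        then show "F x \<in> UNIV \<and> dist (P k x) (F x) < e" using k by (simp add: dist_real_def)
      qed
    qed
  qed simp
  have Fc': "continuous_map Xt euclideanreal F" using Fc by simp
  have "(\<Union>n. S n) = {x \<in> topspace Xt. F x \<noteq> 0}"
  proof -
    have "F x = 0 \<longleftrightarrow> (\<forall>n. (1/2)^n * h n x = 0)" for x
      unfolding F_def
      by (rule suminf_eq_zero_iff) (use tail_bound(1)[of "\<lambda>n. h n x"] h01 in auto)
    moreover have "h n x = 0 \<longleftrightarrow> g n x = 0" for n x unfolding h_def by auto
    ultimately show ?thesis using g(2) by auto
  qed
  then show ?thesis unfolding cozero_set_def using Fc' by blast
qed


primrec Eseq :: "(nat \<Rightarrow> 'a set) \<Rightarrow> ('a set \<Rightarrow> 'a set) \<Rightarrow> ('a set \<Rightarrow> 'a set) \<Rightarrow> nat \<Rightarrow> 'a set" where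
  "Eseq U cl iv 0 = {}"
| "Eseq U cl iv (Suc n) = Eseq U cl iv n \<union> (U n - cl (Eseq U cl iv n)) \<union> iv (U n - cl (Eseq U cl iv n))"

context tgrp begin

definition Iv :: "'a set \<Rightarrow> 'a set" where "Iv S = {y \<in> carrier G. inv y \<in> S}"

lemma Iv_open: "openin T S \<Longrightarrow> openin T (Iv S)"
  unfolding Iv_def by (rule inv_open)

lemma Iv_cozero: "cozero_set T S \<Longrightarrow> cozero_set T (Iv S)"
  unfolding Iv_def using cozero_preimage[OF icont] top by simp

lemma Iv_Iv: "S \<subseteq> carrier G \<Longrightarrow> Iv (Iv S) = S"
  unfolding Iv_def by auto

lemma Iv_sub: "Iv S \<subseteq> carrier G" unfolding Iv_def by auto

lemma one_cl_Iv:
  assumes "\<one> \<in> T closure_of (Iv S)"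
  shows "\<one> \<in> T closure_of S"
  unfolding in_closure_of
proof (intro conjI allI impI)
  show "\<one> \<in> topspace T" using top by simp
  fix Ob assume O: "\<one> \<in> Ob \<and> openin T Ob"
  have "openin T (Iv Ob)" using O Iv_open by auto
  moreover have "\<one> \<in> Iv Ob" using O by (simp add: Iv_def)
  ultimately obtain y where "y \<in> Iv S" "y \<in> Iv Ob" using assms unfolding in_closure_of by meson
  then show "\<exists>y. y \<in> S \<and> y \<in> Ob" unfolding Iv_def by blast
qed

lemma frolik:
  assumes BD: "basically_disconnected T" and CR: "completely_regular_space T"
    and HS: "Hausdorff_space T"
    and LA: "Lindelof_space (subtopology T A)" and AG: "A \<subseteq> carrier G"
    and Ainv: "\<And>x. x \<in> A \<Longrightarrow> inv x \<noteq> x"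
  shows "\<one> \<notin> T closure_of A"
proof (cases "A = {}")
  case True then show ?thesis by simp
next
  case False
  let ?UU = "{U. cozero_set T U \<and> (\<forall>u\<in>U. inv u \<notin> U)}"
  have cov: "A \<subseteq> \<Union>?UU"
  proof
    fix x assume xA: "x \<in> A"
    have xG: "x \<in> carrier G" using xA AG by auto
    have "x \<in> topspace T" "inv x \<in> topspace T" "x \<noteq> inv x" using xG top Ainv[OF xA] by auto
    then obtain P R where PR: "openin T P" "openin T R" "x \<in> P" "inv x \<in> R" "disjnt P R"
      using HS unfolding Hausdorff_space_def by metis
    let ?W = "P \<inter> Iv R"
    have "openin T ?W" using PR Iv_open by auto
    moreover have "x \<in> ?W" using PR xG by (simp add: Iv_def)
    ultimately obtain S where S: "cozero_set T S" "x \<in> S" "S \<subseteq> ?W"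
      using cozero_compreg[OF CR] by meson
    have "\<forall>u\<in>S. inv u \<notin> S"
    proof (intro ballI notI)
      fix u assume u: "u \<in> S" "inv u \<in> S"
      then have "inv u \<in> R" using S(3) by (auto simp: Iv_def)
      moreover have "inv u \<in> P" using u S(3) by auto
      ultimately show False using PR(5) by (auto simp: disjnt_def)
    qed
    then show "x \<in> \<Union>?UU" using S by blast
  qed
  have "\<forall>U\<in>?UU. openin T U" using cozero_open by blast
  then obtain VV where VV: "countable VV" "VV \<subseteq> ?UU" "A \<subseteq> \<Union>VV"
    using LA cov AG top unfolding Lindelof_space_subtopology_subset[OF AG[folded top]] by meson
  have VVne: "VV \<noteq> {}" using VV(3) False by auto
  define U where "U n = from_nat_into VV n" for n
  have Urange: "range U = VV" unfolding U_def using range_from_nat_into[OF VVne VV(1)] .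
  have Uc: "cozero_set T (U n)" and Ud: "\<And>u. u \<in> U n \<Longrightarrow> inv u \<notin> U n" for n
    using Urange VV(2) by auto
  have UG: "U n \<subseteq> carrier G" for n using cozero_subset[OF Uc] top by simp
  have AU: "A \<subseteq> (\<Union>n. U n)" using VV(3) Urange by auto
  define cl where "cl S = T closure_of S" for S
  define E where "E = Eseq U cl Iv"
  define V where "V n = U n - cl (E n)" for n
  have E0: "E 0 = {}" and ES: "E (Suc n) = E n \<union> V n \<union> Iv (V n)" for n
    unfolding E_def V_def by simp_all
  have Ec: "cozero_set T (E n)" for n
  proof (induction n)
    case 0 then show ?case unfolding E0 cozero_set_def by (intro exI[of _ "\<lambda>x. 0"]) auto
  next
    case (Suc n)
    have "openin T (cl (E n))" unfolding cl_def using BD Suc unfolding basically_disconnected_def by blast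
    then have "cozero_set T (topspace T - cl (E n))"
      by (intro clopen_cozero) (auto simp: cl_def)
    then have "cozero_set T (U n \<inter> (topspace T - cl (E n)))" using cozero_Int[OF Uc] by blast
    moreover have "U n \<inter> (topspace T - cl (E n)) = V n" using UG top by (auto simp: V_def)
    ultimately have Vn: "cozero_set T (V n)" by simp
    show ?case unfolding ES using cozero_Un[OF cozero_Un[OF Suc.IH Vn] Iv_cozero[OF Vn]] by simp
  qed
  have Vc: "cozero_set T (V n)" for n
  proof -
    have "openin T (cl (E n))" unfolding cl_def using BD Ec unfolding basically_disconnected_def by blast
    then have "cozero_set T (topspace T - cl (E n))"
      by (intro clopen_cozero) (auto simp: cl_def)
    then have "cozero_set T (U n \<inter> (topspace T - cl (E n)))" using cozero_Int[OF Uc] by blast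
    moreover have "U n \<inter> (topspace T - cl (E n)) = V n" using UG top by (auto simp: V_def)
    ultimately show ?thesis by simp
  qed
  have Emono: "m \<le> n \<Longrightarrow> E m \<subseteq> E n" for m n
  proof (induction n)
    case 0 then show ?case by simp
  next
    case (Suc n)
    show ?case
    proof (cases "m = Suc n")
      case True then show ?thesis by simp
    next
      case False then have "m \<le> n" using Suc.prems by simp
      then show ?thesis using Suc.IH ES[of n] by blast
    qed
  qed
  have VE: "m < n \<Longrightarrow> V m \<subseteq> E n \<and> Iv (V m) \<subseteq> E n" for m n
  proof -
    assume "m < n"
    then have "E (Suc m) \<subseteq> E n" using Emono[of "Suc m" n] by simp
    then show "V m \<subseteq> E n \<and> Iv (V m) \<subseteq> E n" using ES[of m] by blast
  qed
  have Esub: "E n \<subseteq> cl (E n)" for n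
    unfolding cl_def by (rule closure_of_subset[OF cozero_subset[OF Ec]])
  have dis1: "x \<in> V n \<Longrightarrow> x \<notin> Iv (V m)" if "m \<le> n" for x n m
  proof
    assume x: "x \<in> V n" "x \<in> Iv (V m)"
    show False
    proof (cases "m = n")
      case True
      then have "inv x \<in> U n" "x \<in> U n" using x by (simp_all add: V_def Iv_def)
      then show False using Ud[of x n] by blast
    next
      case False
      then have "m < n" using that by simp
      then have "x \<in> cl (E n)" using VE[of m n] x Esub by blast
      then show False using x by (simp add: V_def)
    qed
  qed
  have dis: "x \<in> V n \<Longrightarrow> x \<notin> Iv (V m)" for x n m
  proof (cases "m \<le> n")
    case True then show "x \<in> V n \<Longrightarrow> x \<notin> Iv (V m)" using dis1 by blast
  next
    case False
    show "x \<in> V n \<Longrightarrow> x \<notin> Iv (V m)"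
    proof
      assume x: "x \<in> V n" "x \<in> Iv (V m)"
      have xG: "x \<in> carrier G" using x by (simp add: Iv_def)
      have "inv x \<in> V m" using x by (simp add: Iv_def)
      moreover have "inv x \<in> Iv (V n)" using x xG by (simp add: Iv_def)
      ultimately show False using dis1[of n m "inv x"] False by simp
    qed
  qed
  define C where "C = (\<Union>n. V n)"
  have Cc: "cozero_set T C" unfolding C_def by (rule cozero_countable_Union[OF Vc])
  have IC: "Iv C = (\<Union>n. Iv (V n))" unfolding C_def Iv_def by auto
  have CIC: "C \<inter> Iv C = {}"
  proof -
    have "x \<notin> (\<Union>n. Iv (V n))" if "x \<in> V n" for x n using dis[OF that] by blast
    then show ?thesis unfolding IC unfolding C_def by blast
  qed
  have EC: "E n \<subseteq> C \<union> Iv C" for n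
  proof (induction n)
    case 0 then show ?case by (simp add: E0)
  next
    case (Suc n)
    have "V n \<subseteq> C" unfolding C_def by blast
    moreover have "Iv (V n) \<subseteq> Iv C" unfolding IC by blast
    ultimately show ?case unfolding ES using Suc.IH by blast
  qed
  have CG: "C \<subseteq> carrier G" using cozero_subset[OF Cc] top by simp
  have Acl: "A \<subseteq> cl (C \<union> Iv C)"
  proof
    fix x assume xA: "x \<in> A"
    then obtain n where xU: "x \<in> U n" using AU by auto
    show "x \<in> cl (C \<union> Iv C)"
    proof (cases "x \<in> cl (E n)")
      case True
      then show ?thesis using closure_of_mono[OF EC[of n]] unfolding cl_def by blast
    next
      case False
      then have "x \<in> C" using xU unfolding C_def V_def by blast
      moreover have "C \<union> Iv C \<subseteq> topspace T" using CG Iv_sub top by auto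
      ultimately show ?thesis unfolding cl_def using closure_of_subset[of "C \<union> Iv C" T] by blast
    qed
  qed
  show ?thesis
  proof
    assume "\<one> \<in> T closure_of A"
    moreover have "T closure_of A \<subseteq> cl (C \<union> Iv C)"
      using closure_of_minimal[OF Acl, of T] unfolding cl_def by (simp add: closedin_Un)
    ultimately have "\<one> \<in> cl (C \<union> Iv C)" by blast
    then have "\<one> \<in> cl C \<or> \<one> \<in> cl (Iv C)" unfolding cl_def by simp
    then have one1: "\<one> \<in> cl C" and one2: "\<one> \<in> cl (Iv C)"
      using one_cl_Iv[of C] one_cl_Iv[of "Iv C"] Iv_Iv[OF CG] unfolding cl_def by auto
    have clo: "openin T (cl C)" unfolding cl_def using BD Cc unfolding basically_disconnected_def by blast
    have "\<exists>y. y \<in> Iv C \<and> y \<in> cl C" using one2 clo one1 unfolding cl_def in_closure_of[of _ T "Iv C"] by blast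
    then obtain y where y: "y \<in> Iv C" "y \<in> cl C" by blast
    have "openin T (Iv C)" using Iv_open cozero_open[OF Cc] by blast
    then obtain z where "z \<in> C" "z \<in> Iv C" using y unfolding cl_def in_closure_of by meson
    then show False using CIC by blast
  qed
qed

end



lemma quot_istop: "istopology (\<lambda>U. U \<subseteq> f ` topspace Xt \<and> openin Xt {x \<in> topspace Xt. f x \<in> U})"
  unfolding istopology_def
proof (rule conjI; intro allI impI)
  fix S R assume H: "S \<subseteq> f ` topspace Xt \<and> openin Xt {x \<in> topspace Xt. f x \<in> S}"
      "R \<subseteq> f ` topspace Xt \<and> openin Xt {x \<in> topspace Xt. f x \<in> R}"
  have e: "{x \<in> topspace Xt. f x \<in> S \<inter> R} = {x \<in> topspace Xt. f x \<in> S} \<inter> {x \<in> topspace Xt. f x \<in> R}" by auto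
  show "S \<inter> R \<subseteq> f ` topspace Xt \<and> openin Xt {x \<in> topspace Xt. f x \<in> S \<inter> R}"
    using H unfolding e by auto
next
  fix K assume H: "\<forall>S\<in>K. S \<subseteq> f ` topspace Xt \<and> openin Xt {x \<in> topspace Xt. f x \<in> S}"
  have e: "{x \<in> topspace Xt. f x \<in> \<Union>K} = \<Union>((\<lambda>S. {x \<in> topspace Xt. f x \<in> S}) ` K)" by auto
  show "\<Union>K \<subseteq> f ` topspace Xt \<and> openin Xt {x \<in> topspace Xt. f x \<in> \<Union>K}"
    using H unfolding e by auto
qed

lemma quot_open: "openin (quotient_topology Xt f) U \<longleftrightarrow> U \<subseteq> f ` topspace Xt \<and> openin Xt {x \<in> topspace Xt. f x \<in> U}"
  unfolding quotient_topology_def topology_inverse'[OF quot_istop] by (rule refl)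

lemma quot_topspace: "topspace (quotient_topology Xt f) = f ` topspace Xt"
proof -
  have e: "{x \<in> topspace Xt. f x \<in> f ` topspace Xt} = topspace Xt" by auto
  have "openin (quotient_topology Xt f) (f ` topspace Xt)" unfolding quot_open e by simp
  then have "f ` topspace Xt \<subseteq> topspace (quotient_topology Xt f)" using openin_subset by blast
  moreover have "topspace (quotient_topology Xt f) \<subseteq> f ` topspace Xt"
    using quot_open[of Xt f "topspace (quotient_topology Xt f)"] by simp
  ultimately show ?thesis by blast
qed

lemma quot_cont: "continuous_map Xt (quotient_topology Xt f) f"
  unfolding continuous_map_def quot_topspace by (auto simp: quot_open)

lemma quot_closed: "closedin (quotient_topology Xt f) C \<longleftrightarrow> C \<subseteq> f ` topspace Xt \<and> closedin Xt {x \<in> topspace Xt. f x \<in> C}"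
proof -
  have e: "{x \<in> topspace Xt. f x \<in> f ` topspace Xt - C} = topspace Xt - {x \<in> topspace Xt. f x \<in> C}" by auto
  show ?thesis unfolding closedin_def quot_topspace quot_open e by auto
qed

lemma bd_clopen_sub:
  assumes BD: "basically_disconnected Xt" and H: "closedin Xt H" "openin Xt H"
  shows "basically_disconnected (subtopology Xt H)"
  unfolding basically_disconnected_def
proof (intro allI impI)
  fix C assume "cozero_set (subtopology Xt H) C"
  then obtain g where g: "continuous_map (subtopology Xt H) euclideanreal g"
    "C = {x \<in> topspace (subtopology Xt H). g x \<noteq> 0}" unfolding cozero_set_def by blast
  have HX: "H \<subseteq> topspace Xt" using H openin_subset by blast
  define g' where "g' x = (if x \<in> H then g x else 0)" for x
  have gc: "continuous_map Xt euclideanreal g'"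
    unfolding continuous_map_def
  proof (intro conjI allI impI)
    show "g' \<in> topspace Xt \<rightarrow> topspace euclideanreal" by simp
    fix U :: "real set" assume U: "openin euclideanreal U"
    have "openin (subtopology Xt H) {x \<in> topspace (subtopology Xt H). g x \<in> U}"
      by (rule openin_continuous_map_preimage[OF g(1) U])
    then have o1: "openin Xt {x \<in> H. g x \<in> U}" 
      using openin_trans_full[OF _ H(2)] HX by (simp add: Int_absorb1 topspace_subtopology)
    have o2: "openin Xt (topspace Xt - H)" using H(1) by auto
    have e: "{x \<in> topspace Xt. g' x \<in> U} = {x \<in> H. g x \<in> U} \<union> (if 0 \<in> U then topspace Xt - H else {})"
      using HX unfolding g'_def by auto
    show "openin Xt {x \<in> topspace Xt. g' x \<in> U}" unfolding e using o1 o2 by auto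
  qed
  have C': "C = {x \<in> topspace Xt. g' x \<noteq> 0}" using g(2) HX unfolding g'_def by auto
  have cz: "cozero_set Xt C" unfolding cozero_set_def using gc C' by blast
  have CH: "C \<subseteq> H" using C' g'_def by auto
  have clo: "openin Xt (Xt closure_of C)" using BD cz unfolding basically_disconnected_def by blast
  have clH: "Xt closure_of C \<subseteq> H" using closure_of_minimal[OF CH H(1)] .
  have "subtopology Xt H closure_of C = Xt closure_of C"
    unfolding closure_of_subtopology using CH clH by (simp add: Int_absorb1 Int_absorb2)
  moreover have "H \<inter> Xt closure_of C = Xt closure_of C" using clH by blast
  ultimately show "openin (subtopology Xt H) (subtopology Xt H closure_of C)"
    using openin_subtopology_Int2[OF clo, of H] by simp
qed


context tgrp begin

lemma sq_nbhd:
  assumes "openin T V" "\<one> \<in> V"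
  shows "\<exists>W. openin T W \<and> \<one> \<in> W \<and> (\<forall>a\<in>W. \<forall>b\<in>W. a \<otimes> b \<in> V \<and> a \<otimes> inv b \<in> V)"
proof -
  have c1: "continuous_map (prod_topology T T) T (\<lambda>p. fst p \<otimes> snd p)" by (rule mcont)
  have c2: "continuous_map (prod_topology T T) T (\<lambda>p. fst p \<otimes> inv (snd p))"
    by (intro cont_mult cont_inv continuous_map_fst continuous_map_snd)
  obtain W1 where W1: "openin T W1" "\<one> \<in> W1" "\<forall>u\<in>W1. \<forall>v\<in>W1. u \<otimes> v \<in> V"
    using nbhd1[OF c1 assms(1)] assms(2) by auto
  obtain W2 where W2: "openin T W2" "\<one> \<in> W2" "\<forall>u\<in>W2. \<forall>v\<in>W2. u \<otimes> inv v \<in> V"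
    using nbhd1[OF c2 assms(1)] assms(2) by auto
  show ?thesis using W1 W2 by (intro exI[of _ "W1 \<inter> W2"]) auto
qed

lemma conj_nbhd:
  assumes L: "Lindelof_space T" and "openin T V" "\<one> \<in> V"
  shows "\<exists>WW. countable WW \<and> (\<forall>W\<in>WW. openin T W \<and> \<one> \<in> W) \<and>
            (\<forall>g\<in>carrier G. \<exists>W\<in>WW. \<forall>w\<in>W. g \<otimes> w \<otimes> inv g \<in> V)"
proof -
  have c: "continuous_map (prod_topology T T) T (\<lambda>p. fst p \<otimes> snd p \<otimes> inv (fst p))"
    by (intro cont_mult cont_inv continuous_map_fst continuous_map_snd)
  have "\<forall>g\<in>carrier G. \<exists>Oo W. openin T Oo \<and> openin T W \<and> g \<in> Oo \<and> \<one> \<in> W \<and>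
           (\<forall>u\<in>Oo. \<forall>v\<in>W. u \<otimes> v \<otimes> inv u \<in> V)"
  proof
    fix g assume g: "g \<in> carrier G"
    have "(\<lambda>p. fst p \<otimes> snd p \<otimes> inv (fst p)) (g, \<one>) \<in> V" using g assms by simp
    from nbhd2[OF c assms(2) this g one_closed] show "\<exists>Oo W. openin T Oo \<and> openin T W \<and> g \<in> Oo \<and> \<one> \<in> W \<and>
           (\<forall>u\<in>Oo. \<forall>v\<in>W. u \<otimes> v \<otimes> inv u \<in> V)" by simp
  qed
  then obtain Of Wf where OW: "\<And>g. g \<in> carrier G \<Longrightarrow> openin T (Of g) \<and> openin T (Wf g) \<and> g \<in> Of g \<and> \<one> \<in> Wf g \<and>
           (\<forall>u\<in>Of g. \<forall>v\<in>Wf g. u \<otimes> v \<otimes> inv u \<in> V)"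
    by metis
  have "\<forall>U\<in>Of ` carrier G. openin T U" using OW by blast
  moreover have "topspace T \<subseteq> \<Union>(Of ` carrier G)" using OW top by blast
  ultimately obtain BB where BB: "countable BB" "BB \<subseteq> Of ` carrier G" "topspace T \<subseteq> \<Union>BB"
    using L unfolding Lindelof_space_alt by meson
  then obtain Gm where Gm: "countable Gm" "Gm \<subseteq> carrier G" "BB = Of ` Gm"
    using countable_subset_image[of BB Of "carrier G"] by blast
  show ?thesis
  proof (intro exI[of _ "Wf ` Gm"] conjI)
    show "countable (Wf ` Gm)" using Gm by simp
    show "\<forall>W\<in>Wf ` Gm. openin T W \<and> \<one> \<in> W" using OW Gm by blast
  next
    show "\<forall>g\<in>carrier G. \<exists>W\<in>Wf ` Gm. \<forall>w\<in>W. g \<otimes> w \<otimes> inv g \<in> V"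
    proof
    fix g assume g: "g \<in> carrier G"
    then obtain h where h: "h \<in> Gm" "g \<in> Of h" using BB Gm top by blast
    then have "\<forall>w\<in>Wf h. g \<otimes> w \<otimes> inv g \<in> V" using OW[of h] Gm by blast
    then show "\<exists>W\<in>Wf ` Gm. \<forall>w\<in>W. g \<otimes> w \<otimes> inv g \<in> V" using h by blast
  qed
  qed
qed

end


context tgrp begin

lemma exists_N:
  assumes L: "Lindelof_space T" and nP: "\<not> P_space T"
  shows "\<exists>N VV. N \<lhd> G \<and> closedin T N \<and> \<not> openin T N \<and> countable VV \<and> VV \<noteq> {} \<and>
     (\<forall>W\<in>VV. openin T W) \<and> N = \<Inter>VV \<and> (\<forall>V\<in>VV. \<exists>W\<in>VV. \<forall>a\<in>W. \<forall>b\<in>W. a \<otimes> b \<in> V)"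
proof -
  obtain S where gS: "gdelta_in T S" and nS: "\<not> openin T S" using nP unfolding P_space_def by blast
  obtain FF where FF: "countable FF" "FF \<noteq> {}" "\<forall>U\<in>FF. openin T U" "S = \<Inter>FF"
    using gS unfolding gdelta_in_def by blast
  obtain x where xS: "x \<in> S" and xno: "\<And>Ob. openin T Ob \<Longrightarrow> x \<in> Ob \<Longrightarrow> \<not> Ob \<subseteq> S"
    using nS openin_subopen[of T S] by blast
  have SG: "S \<subseteq> carrier G" using FF open_subset by blast
  have xG: "x \<in> carrier G" using xS SG by blast
  define VV0 where "VV0 = (\<lambda>U. {y \<in> carrier G. x \<otimes> y \<in> U}) ` FF"
  have VV0p: "\<forall>V\<in>VV0. openin T V \<and> \<one> \<in> V"
    using FF xS xG ltrans_open unfolding VV0_def by auto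
  have P0: "\<not> (\<exists>Ob. openin T Ob \<and> \<one> \<in> Ob \<and> Ob \<subseteq> \<Inter>VV0)"
  proof
    assume "\<exists>Ob. openin T Ob \<and> \<one> \<in> Ob \<and> Ob \<subseteq> \<Inter>VV0"
    then obtain Ob where Ob: "openin T Ob" "\<one> \<in> Ob" "Ob \<subseteq> \<Inter>VV0" by blast
    let ?X = "{z \<in> carrier G. inv x \<otimes> z \<in> Ob}"
    have "openin T ?X" using ltrans_open[OF Ob(1)] xG by simp
    moreover have "x \<in> ?X" using xG Ob by simp
    moreover have "?X \<subseteq> S"
    proof
      fix z assume z: "z \<in> ?X"
      have "z = x \<otimes> (inv x \<otimes> z)" using z xG by (simp add: m_assoc[symmetric])
      moreover have "\<forall>U\<in>FF. x \<otimes> (inv x \<otimes> z) \<in> U" using z Ob(3) unfolding VV0_def by blast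
      ultimately show "z \<in> S" using FF(4) by simp
    qed
    ultimately show False using xno by blast
  qed
  define sqf where "sqf V = (SOME W. openin T W \<and> \<one> \<in> W \<and> (\<forall>a\<in>W. \<forall>b\<in>W. a \<otimes> b \<in> V \<and> a \<otimes> inv b \<in> V))" for V
  have sqf: "openin T (sqf V) \<and> \<one> \<in> sqf V \<and>
      (\<forall>a\<in>sqf V. \<forall>b\<in>sqf V. a \<otimes> b \<in> V \<and> a \<otimes> inv b \<in> V)" if "openin T V" "\<one> \<in> V" for V
    unfolding sqf_def by (rule someI_ex[OF sq_nbhd[OF that]])
  define cjf where "cjf V = (SOME WW. countable WW \<and> (\<forall>W\<in>WW. openin T W \<and> \<one> \<in> W) \<and>
            (\<forall>g\<in>carrier G. \<exists>W\<in>WW. \<forall>w\<in>W. g \<otimes> w \<otimes> inv g \<in> V))" for V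
  have cjf: "countable (cjf V) \<and> (\<forall>W\<in>cjf V. openin T W \<and> \<one> \<in> W) \<and>
            (\<forall>g\<in>carrier G. \<exists>W\<in>cjf V. \<forall>w\<in>W. g \<otimes> w \<otimes> inv g \<in> V)" if "openin T V" "\<one> \<in> V" for V
    unfolding cjf_def by (rule someI_ex[OF conj_nbhd[OF L that]])
  define step where "step SS = SS \<union> sqf ` SS \<union> \<Union>(cjf ` SS)" for SS
  define VVk where "VVk k = (step ^^ k) VV0" for k
  define VV where "VV = (\<Union>k. VVk k)"
  have VVk0: "VVk 0 = VV0" unfolding VVk_def by simp
  have VVkS: "VVk (Suc k) = step (VVk k)" for k unfolding VVk_def by simp
  have inv_k: "countable (VVk k) \<and> (\<forall>V\<in>VVk k. openin T V \<and> \<one> \<in> V)" for k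
  proof (induction k)
    case 0
    have "countable VV0" unfolding VV0_def using FF(1) by simp
    then show ?case using VV0p VVk0 by simp
  next
    case (Suc k)
    have c: "countable (step (VVk k))"
      unfolding step_def using Suc cjf by (auto intro!: countable_UN)
    have "\<forall>V\<in>step (VVk k). openin T V \<and> \<one> \<in> V"
    proof
      fix V assume "V \<in> step (VVk k)"
      then consider "V \<in> VVk k" | U where "U \<in> VVk k" "V = sqf U" | U where "U \<in> VVk k" "V \<in> cjf U"
        unfolding step_def by blast
      then show "openin T V \<and> \<one> \<in> V"
      proof cases
        case 1 then show ?thesis using Suc by blast
      next
        case 2 then show ?thesis using Suc sqf by blast
      next
        case 3 then show ?thesis using Suc cjf by blast
      qed
    qed
    then show ?case using c VVkS by simp
  qed
  have VVc: "countable VV" unfolding VV_def using inv_k by (simp add: countable_UN)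
  have VVo: "\<forall>V\<in>VV. openin T V \<and> \<one> \<in> V" unfolding VV_def using inv_k by blast
  have VV0sub: "VV0 \<subseteq> VV" unfolding VV_def using VVk0 by blast
  have VVne: "VV \<noteq> {}" using VV0sub FF(2) unfolding VV0_def by blast
  have VVsq: "sqf V \<in> VV" if Vin: "V \<in> VV" for V
  proof -
    obtain k where "V \<in> VVk k" using Vin unfolding VV_def by blast
    then have "sqf V \<in> VVk (Suc k)" unfolding VVkS step_def by blast
    then show ?thesis unfolding VV_def by blast
  qed
  have VVcj: "cjf V \<subseteq> VV" if Vin: "V \<in> VV" for V
  proof -
    obtain k where "V \<in> VVk k" using Vin unfolding VV_def by blast
    then have "cjf V \<subseteq> VVk (Suc k)" unfolding VVkS step_def by blast
    then show ?thesis unfolding VV_def by blast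
  qed
  define N where "N = \<Inter>VV"
  have NG: "N \<subseteq> carrier G" unfolding N_def using VVne VVo open_subset by blast
  have oneN: "\<one> \<in> N" unfolding N_def using VVo by blast
  have Nmul: "a \<otimes> b \<in> N" if "a \<in> N" "b \<in> N" for a b
    unfolding N_def
  proof
    fix V assume V: "V \<in> VV"
    have "sqf V \<in> VV" using VVsq V .
    then have "a \<in> sqf V" "b \<in> sqf V" using that unfolding N_def by blast+
    then show "a \<otimes> b \<in> V" using sqf[of V] VVo V by blast
  qed
  have Ninv: "inv a \<in> N" if "a \<in> N" for a
    unfolding N_def
  proof
    fix V assume V: "V \<in> VV"
    have "sqf V \<in> VV" using VVsq V .
    then have "a \<in> sqf V" "\<one> \<in> sqf V" using that oneN unfolding N_def by blast+
    then have "\<one> \<otimes> inv a \<in> V" using sqf[of V] VVo V by blast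
    then show "inv a \<in> V" using that NG by auto
  qed
  have Nsub: "subgroup N G"
    by (rule subgroupI[OF NG]) (use oneN Ninv Nmul in auto)
  have Nnorm: "N \<lhd> G"
    unfolding normal_inv_iff
  proof (intro conjI Nsub ballI)
    fix g h assume g: "g \<in> carrier G" and h: "h \<in> N"
    show "g \<otimes> h \<otimes> inv g \<in> N" unfolding N_def
    proof
      fix V assume V: "V \<in> VV"
      obtain W where W: "W \<in> cjf V" "\<forall>w\<in>W. g \<otimes> w \<otimes> inv g \<in> V" using cjf[of V] VVo V g by blast
      have "W \<in> VV" using VVcj V W(1) by blast
      then have "h \<in> W" using h unfolding N_def by blast
      then show "g \<otimes> h \<otimes> inv g \<in> V" using W(2) by blast
    qed
  qed
  have Nclosed: "closedin T N"
  proof -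
    have "T closure_of N \<subseteq> N"
    proof
      fix y assume y: "y \<in> T closure_of N"
      hence yG: "y \<in> carrier G" using closure_of_subset_topspace top by fastforce
      show "y \<in> N" unfolding N_def
      proof
        fix V assume V: "V \<in> VV"
        let ?W = "sqf V"
        have Wv: "?W \<in> VV" using VVsq V .
        have Wo: "openin T ?W" using VVo Wv by blast
        let ?O = "{z \<in> carrier G. inv z \<otimes> y \<in> ?W}"
        have "openin T ?O"
          by (intro open_pre Wo cont_mult cont_inv cont_id cont_const yG)
        moreover have "y \<in> ?O" using yG VVo Wv by simp
        ultimately obtain n where n: "n \<in> N" "n \<in> ?O" using y unfolding in_closure_of by meson
        have nG: "n \<in> carrier G" using n by simp
        have "y = n \<otimes> (inv n \<otimes> y)" using nG yG by (simp add: m_assoc[symmetric])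
        moreover have "n \<in> ?W" using n(1) Wv unfolding N_def by blast
        moreover have "inv n \<otimes> y \<in> ?W" using n by simp
        moreover have "\<forall>a\<in>?W. \<forall>b\<in>?W. a \<otimes> b \<in> V" using sqf[of V] VVo V by blast
        ultimately show "y \<in> V" by metis
      qed
    qed
    moreover have NT: "N \<subseteq> topspace T" using NG top by simp
    moreover have "N \<subseteq> T closure_of N" by (rule closure_of_subset[OF NT])
    ultimately have "T closure_of N = N" by (meson equalityI)
    then show ?thesis using closure_of_eq by blast
  qed
  have Nnopen: "\<not> openin T N"
  proof
    assume "openin T N"
    moreover have "N \<subseteq> \<Inter>VV0" unfolding N_def using VV0sub by blast
    ultimately show False using P0 oneN by blast
  qed
  have VVsq2: "\<forall>V\<in>VV. \<exists>W\<in>VV. \<forall>a\<in>W. \<forall>b\<in>W. a \<otimes> b \<in> V"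
  proof
    fix V assume V: "V \<in> VV"
    show "\<exists>W\<in>VV. \<forall>a\<in>W. \<forall>b\<in>W. a \<otimes> b \<in> V"
      using VVsq[OF V] sqf[of V] VVo V by blast
  qed
  show ?thesis
    using Nnorm Nclosed Nnopen VVc VVne VVo VVsq2 unfolding N_def by blast
qed

end



lemma (in group) gen_bool:
  assumes S: "S \<subseteq> carrier G" and cm: "\<And>a b. a \<in> S \<Longrightarrow> b \<in> S \<Longrightarrow> a \<otimes> b = b \<otimes> a"
    and sq: "\<And>a. a \<in> S \<Longrightarrow> a \<otimes> a = \<one>"
  shows "x \<in> generate G S \<Longrightarrow> x \<otimes> x = \<one>"
proof -
  have invS: "inv a = a" if "a \<in> S" for a
    using inv_equality[OF sq[OF that]] S that by blast
  have gc: "x \<in> generate G S \<Longrightarrow> x \<in> carrier G" for x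
    using generate_incl[OF S] by blast
  have st1: "x \<in> generate G S \<Longrightarrow> (\<forall>b\<in>S. x \<otimes> b = b \<otimes> x)" for x
  proof (induction rule: generate.induct)
    case one then show ?case using S by auto
  next
    case (incl h) then show ?case using cm by blast
  next
    case (inv h) then show ?case using cm invS by simp
  next
    case (eng h1 h2)
    show ?case
    proof
      fix b assume b: "b \<in> S"
      have c: "h1 \<in> carrier G" "h2 \<in> carrier G" "b \<in> carrier G" using gc eng.hyps b S by auto
      have "h1 \<otimes> h2 \<otimes> b = h1 \<otimes> (h2 \<otimes> b)" using c by (simp add: m_assoc)
      also have "\<dots> = h1 \<otimes> (b \<otimes> h2)" using eng.IH b by simp
      also have "\<dots> = (h1 \<otimes> b) \<otimes> h2" using c by (simp add: m_assoc)
      also have "\<dots> = (b \<otimes> h1) \<otimes> h2" using eng.IH b by simp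
      also have "\<dots> = b \<otimes> (h1 \<otimes> h2)" using c by (simp add: m_assoc)
      finally show "h1 \<otimes> h2 \<otimes> b = b \<otimes> (h1 \<otimes> h2)" .
    qed
  qed
  have st2: "y \<in> generate G S \<Longrightarrow> (\<forall>x\<in>generate G S. x \<otimes> y = y \<otimes> x)" for y
  proof (induction rule: generate.induct)
    case one then show ?case using gc by auto
  next
    case (incl h) then show ?case using st1 by blast
  next
    case (inv h)
    then have "inv h = h" using invS by simp
    then show ?case using st1 inv.hyps by auto
  next
    case (eng h1 h2)
    show ?case
    proof
      fix x assume x: "x \<in> generate G S"
      have c: "h1 \<in> carrier G" "h2 \<in> carrier G" "x \<in> carrier G" using gc eng.hyps x by auto
      have "x \<otimes> (h1 \<otimes> h2) = (x \<otimes> h1) \<otimes> h2" using c by (simp add: m_assoc)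
      also have "\<dots> = (h1 \<otimes> x) \<otimes> h2" using eng.IH x by simp
      also have "\<dots> = h1 \<otimes> (x \<otimes> h2)" using c by (simp add: m_assoc)
      also have "\<dots> = h1 \<otimes> (h2 \<otimes> x)" using eng.IH x by simp
      also have "\<dots> = h1 \<otimes> h2 \<otimes> x" using c by (simp add: m_assoc)
      finally show "x \<otimes> (h1 \<otimes> h2) = h1 \<otimes> h2 \<otimes> x" .
    qed
  qed
  show "x \<in> generate G S \<Longrightarrow> x \<otimes> x = \<one>"
  proof (induction rule: generate.induct)
    case one then show ?case by simp
  next
    case (incl h) then show ?case using sq by blast
  next
    case (inv h) then show ?case using sq invS by simp
  next
    case (eng h1 h2)
    have c: "h1 \<in> carrier G" "h2 \<in> carrier G" using gc eng.hyps by auto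
    have "h1 \<otimes> h2 \<otimes> (h1 \<otimes> h2) = h1 \<otimes> (h2 \<otimes> h1) \<otimes> h2" using c by (simp add: m_assoc)
    also have "\<dots> = h1 \<otimes> (h1 \<otimes> h2) \<otimes> h2" using st2[OF eng.hyps(2)] eng.hyps(1) by simp
    also have "\<dots> = (h1 \<otimes> h1) \<otimes> (h2 \<otimes> h2)" using c by (simp add: m_assoc)
    also have "\<dots> = \<one>" using eng.IH by simp
    finally show ?case .
  qed
qed



lemma (in group) comm_invol:
  assumes c: "a \<in> carrier G" "b \<in> carrier G" and sa: "a \<otimes> a = \<one>" and sb: "b \<otimes> b = \<one>"
    and sab: "(a \<otimes> b) \<otimes> (a \<otimes> b) = \<one>"
  shows "a \<otimes> b = b \<otimes> a"
proof -
  have ia: "inv a = a" using inv_equality[OF sa] c by simp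
  have ib: "inv b = b" using inv_equality[OF sb] c by simp
  have iab: "inv (a \<otimes> b) = a \<otimes> b" using inv_equality[OF sab] c by simp
  have "inv (a \<otimes> b) = inv b \<otimes> inv a" using inv_mult_group c by simp
  then show ?thesis using ia ib iab by simp
qed

context tgrp begin

lemma main_quot:
  assumes L: "Lindelof_space T" and HS: "Hausdorff_space T" and BD: "basically_disconnected T"
    and Nn: "N \<lhd> G" and Ncl: "closedin T N" and Nno: "\<not> openin T N"
    and VVc: "countable VV" and VVne: "VV \<noteq> {}" and VVo: "\<forall>W\<in>VV. openin T W"
    and NVV: "N = \<Inter>VV" and VVsq: "\<forall>V\<in>VV. \<exists>W\<in>VV. \<forall>a\<in>W. \<forall>b\<in>W. a \<otimes> b \<in> V"
  shows "let Q = quotient_group_topology G T N in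
          \<not> discrete_space Q \<and>
          countable_pseudocharacter (G Mod N) Q \<and>
          (\<exists>H. subgroup H (G Mod N) \<and> openin Q H \<and>
               boolean_group ((G Mod N)\<lparr>carrier := H\<rparr>) \<and>
               basically_disconnected (subtopology Q H))"
proof -
  interpret Nn: normal N G by (rule Nn)
  define p where "p = (\<lambda>x. N #> x)"
  define Q where "Q = quotient_topology T p"
  have Qdef: "quotient_group_topology G T N = Q" unfolding Q_def p_def quotient_group_topology_def by simp
  have NG: "N \<subseteq> carrier G" by (rule Nn.subset)
  have Qopen: "openin Q U \<longleftrightarrow> U \<subseteq> p ` carrier G \<and> openin T {x \<in> carrier G. p x \<in> U}" for U
    unfolding Q_def quot_open top ..
  have Qclosed: "closedin Q U \<longleftrightarrow> U \<subseteq> p ` carrier G \<and> closedin T {x \<in> carrier G. p x \<in> U}" for U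
    unfolding Q_def quot_closed top ..
  have Qtop: "topspace Q = p ` carrier G" unfolding Q_def quot_topspace top ..
  have pcont: "continuous_map T Q p" unfolding Q_def by (rule quot_cont)
  have carQ: "carrier (G Mod N) = p ` carrier G" unfolding p_def by (rule carrier_FactGroup)
  have grpQ: "group (G Mod N)" by (rule Nn.factorgroup_is_group)
  have p2: "p (n \<otimes> x) = p x" if "n \<in> N" "x \<in> carrier G" for n x
  proof -
    have nG: "n \<in> carrier G" using that NG by blast
    have "N #> (n \<otimes> x) = (N #> n) #> x" using coset_mult_assoc[OF NG nG that(2)] by simp
    also have "N #> n = N" using coset_join2[OF nG Nn.subgroup_axioms that(1)] .
    finally show ?thesis unfolding p_def by simp
  qed
  have p3: "\<exists>n\<in>N. y = n \<otimes> x" if "x \<in> carrier G" "y \<in> carrier G" "p x = p y" for x y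
  proof -
    have "y \<in> N #> y" using rcos_self[OF that(2) Nn.subgroup_axioms] .
    then have "y \<in> N #> x" using that(3) unfolding p_def by simp
    then show ?thesis unfolding r_coset_def by blast
  qed
  have p4: "p x = N \<longleftrightarrow> x \<in> N" if "x \<in> carrier G" for x
  proof
    assume "p x = N"
    then show "x \<in> N" using rcos_self[OF that Nn.subgroup_axioms] unfolding p_def by simp
  next
    assume "x \<in> N"
    then show "p x = N" unfolding p_def using coset_join2[OF that Nn.subgroup_axioms] by simp
  qed
  have p5: "p (x \<otimes> y) = p x \<otimes>\<^bsub>G Mod N\<^esub> p y" if "x \<in> carrier G" "y \<in> carrier G" for x y
    unfolding p_def using Nn.rcos_sum[OF that] by simp
  have sat: "{x \<in> carrier G. p x \<in> p ` S} = {x \<in> carrier G. \<exists>n\<in>N. n \<otimes> x \<in> S}" if SG: "S \<subseteq> carrier G" for S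
  proof (intro equalityI subsetI)
    fix x assume x: "x \<in> {x \<in> carrier G. p x \<in> p ` S}"
    then obtain s where s: "s \<in> S" "p x = p s" by blast
    then obtain n where "n \<in> N" "s = n \<otimes> x" using p3[of x s] x SG by blast
    then show "x \<in> {x \<in> carrier G. \<exists>n\<in>N. n \<otimes> x \<in> S}" using x s by blast
  next
    fix x assume x: "x \<in> {x \<in> carrier G. \<exists>n\<in>N. n \<otimes> x \<in> S}"
    then obtain n where n: "n \<in> N" "n \<otimes> x \<in> S" by blast
    then have "p x = p (n \<otimes> x)" using p2 x by simp
    then show "x \<in> {x \<in> carrier G. p x \<in> p ` S}" using x n by blast
  qed
  have sat_open: "openin Q (p ` S)" if So: "openin T S" for S
  proof -
    have SG: "S \<subseteq> carrier G" using open_subset[OF So] .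
    have e: "{x \<in> carrier G. \<exists>n\<in>N. n \<otimes> x \<in> S} = \<Union>((\<lambda>n. {x \<in> carrier G. n \<otimes> x \<in> S}) ` N)" by blast
    have "\<forall>n\<in>N. openin T {x \<in> carrier G. n \<otimes> x \<in> S}"
      using ltrans_open[OF So] NG by blast
    then have "openin T (\<Union>((\<lambda>n. {x \<in> carrier G. n \<otimes> x \<in> S}) ` N))"
      by (intro openin_Union) auto
    then show ?thesis unfolding Qopen sat[OF SG] e using SG by blast
  qed
  have nd: "\<not> discrete_space Q"
  proof
    assume "discrete_space Q"
    moreover have "N \<in> topspace Q" unfolding Qtop using p4[of \<one>] by force
    ultimately have "openin Q {N}" unfolding discrete_space_def by blast
    then have "openin T {x \<in> carrier G. p x \<in> {N}}" unfolding Qopen by blast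
    moreover have "{x \<in> carrier G. p x \<in> {N}} = N" using p4 NG by blast
    ultimately show False using Nno by simp
  qed
  have cpc: "countable_pseudocharacter (G Mod N) Q"
    unfolding countable_pseudocharacter_def gdelta_in_def
  proof (intro exI[of _ "(\<lambda>W. p ` W) ` VV"] conjI)
    show "countable ((\<lambda>W. p ` W) ` VV)" using VVc by simp
    show "(\<lambda>W. p ` W) ` VV \<noteq> {}" using VVne by simp
    show "\<forall>U\<in>(\<lambda>W. p ` W) ` VV. openin Q U" using VVo sat_open by blast
    show "{\<one>\<^bsub>G Mod N\<^esub>} = \<Inter>((\<lambda>W. p ` W) ` VV)"
    proof (intro equalityI subsetI)
      fix Xc assume "Xc \<in> {\<one>\<^bsub>G Mod N\<^esub>}"
      then have Xc: "Xc = p \<one>" using p4[of \<one>] by simp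
      have "\<one> \<in> W" if "W \<in> VV" for W using that NVV Nn.one_closed by blast
      then show "Xc \<in> \<Inter>((\<lambda>W. p ` W) ` VV)" unfolding Xc by blast
    next
      fix Xc assume Xc: "Xc \<in> \<Inter>((\<lambda>W. p ` W) ` VV)"
      obtain W0 where "W0 \<in> VV" using VVne by blast
      then obtain x where x: "x \<in> W0" "Xc = p x" using Xc by blast
      have xG: "x \<in> carrier G" using x(1) open_subset VVo \<open>W0 \<in> VV\<close> by blast
      have "x \<in> V" if V: "V \<in> VV" for V
      proof -
        obtain W where W: "W \<in> VV" "\<forall>a\<in>W. \<forall>b\<in>W. a \<otimes> b \<in> V" using VVsq V by blast
        have WG: "W \<subseteq> carrier G" using open_subset VVo W(1) by blast
        have "p x \<in> p ` W" using Xc W(1) x(2) by blast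
        then have "x \<in> {x \<in> carrier G. \<exists>n\<in>N. n \<otimes> x \<in> W}" using sat[OF WG] xG by blast
        then obtain n where n: "n \<in> N" "n \<otimes> x \<in> W" by blast
        have nG: "n \<in> carrier G" using n NG by blast
        have "inv n \<in> W" using Nn.m_inv_closed[OF n(1)] W(1) NVV by blast
        then have "inv n \<otimes> (n \<otimes> x) \<in> V" using W(2) n(2) by blast
        moreover have "inv n \<otimes> (n \<otimes> x) = x" using nG xG by (simp add: m_assoc[symmetric])
        ultimately show ?thesis by simp
      qed
      then have "x \<in> N" using NVV by blast
      then have "Xc = N" using p4 xG x(2) by simp
      then show "Xc \<in> {\<one>\<^bsub>G Mod N\<^esub>}" by simp
    qed
  qed
  have bdQ: "basically_disconnected Q"
    unfolding basically_disconnected_def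
  proof (intro allI impI)
    fix Y assume cY: "cozero_set Q Y"
    have YQ: "Y \<subseteq> p ` carrier G" using cozero_subset[OF cY] Qtop by simp
    let ?P = "{x \<in> carrier G. p x \<in> Y}"
    have cP: "cozero_set T ?P" using cozero_preimage[OF pcont cY] top by simp
    define K where "K = T closure_of ?P"
    have Ko: "openin T K" using BD cP unfolding basically_disconnected_def K_def by blast
    have Kc: "closedin T K" unfolding K_def by simp
    have KG: "K \<subseteq> carrier G" using closure_of_subset_topspace[of T ?P] top unfolding K_def by simp
    have PT: "?P \<subseteq> topspace T" using top by auto
    have PK: "?P \<subseteq> K" unfolding K_def by (rule closure_of_subset[OF PT])
    have Ksat: "n \<otimes> x \<in> K" if n: "n \<in> N" and x: "x \<in> K" for n x
    proof -
      have nG: "n \<in> carrier G" using n NG by blast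
      have xG: "x \<in> carrier G" using x KG by blast
      have xcl: "\<forall>Ob. x \<in> Ob \<and> openin T Ob \<longrightarrow> (\<exists>y. y \<in> ?P \<and> y \<in> Ob)"
        using x unfolding K_def in_closure_of by blast
      show ?thesis unfolding K_def in_closure_of
      proof (intro conjI allI impI)
        show "n \<otimes> x \<in> topspace T" using nG xG top by simp
        fix Ob assume Ob: "n \<otimes> x \<in> Ob \<and> openin T Ob"
        have "openin T {z \<in> carrier G. n \<otimes> z \<in> Ob}" using ltrans_open[of Ob n] Ob nG by simp
        moreover have "x \<in> {z \<in> carrier G. n \<otimes> z \<in> Ob}" using Ob xG by simp
        ultimately have "\<exists>y. y \<in> ?P \<and> y \<in> {z \<in> carrier G. n \<otimes> z \<in> Ob}"
          using xcl[rule_format, of "{z \<in> carrier G. n \<otimes> z \<in> Ob}"] by blast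
        then obtain y where y: "y \<in> ?P" "y \<in> {z \<in> carrier G. n \<otimes> z \<in> Ob}" by blast
        have "p (n \<otimes> y) = p y" using p2[OF n, of y] y by simp
        then have "n \<otimes> y \<in> ?P" using y nG by simp
        then show "\<exists>y. y \<in> ?P \<and> y \<in> Ob" using y by blast
      qed
    qed
    have satK: "{x \<in> carrier G. p x \<in> p ` K} = K"
    proof -
      have "{x \<in> carrier G. \<exists>n\<in>N. n \<otimes> x \<in> K} = K"
      proof (intro equalityI subsetI)
        fix x assume "x \<in> {x \<in> carrier G. \<exists>n\<in>N. n \<otimes> x \<in> K}"
        then obtain n where n: "n \<in> N" "n \<otimes> x \<in> K" and xG: "x \<in> carrier G" by blast
        have nG: "n \<in> carrier G" using n NG by blast
        have "inv n \<otimes> (n \<otimes> x) \<in> K" using Ksat[OF Nn.m_inv_closed[OF n(1)] n(2)] .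
        then show "x \<in> K" using nG xG by (simp add: m_assoc[symmetric])
      next
        fix x assume x: "x \<in> K"
        then have "\<one> \<otimes> x \<in> K" using KG by auto
        then show "x \<in> {x \<in> carrier G. \<exists>n\<in>N. n \<otimes> x \<in> K}" using x KG Nn.one_closed by blast
      qed
      then show ?thesis using sat[OF KG] by simp
    qed
    have pre: "{x \<in> carrier G. p x \<in> Q closure_of Y} = K"
    proof (intro equalityI)
      have "closedin T {x \<in> topspace T. p x \<in> Q closure_of Y}"
        by (rule closedin_continuous_map_preimage[OF pcont closedin_closure_of])
      then have c1: "closedin T {x \<in> carrier G. p x \<in> Q closure_of Y}" using top by simp
      have YT: "Y \<subseteq> topspace Q" using YQ Qtop by simp
      have "Y \<subseteq> Q closure_of Y" by (rule closure_of_subset[OF YT])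
      then have "?P \<subseteq> {x \<in> carrier G. p x \<in> Q closure_of Y}" by blast
      then show "K \<subseteq> {x \<in> carrier G. p x \<in> Q closure_of Y}"
        unfolding K_def by (rule closure_of_minimal[OF _ c1])
    next
      have pKc: "closedin Q (p ` K)" unfolding Qclosed satK using KG Kc by blast
      have "Y \<subseteq> p ` K"
      proof
        fix y assume y: "y \<in> Y"
        then obtain x where x: "x \<in> carrier G" "y = p x" using YQ by blast
        then have "x \<in> K" using PK y by blast
        then show "y \<in> p ` K" using x by blast
      qed
      then have "Q closure_of Y \<subseteq> p ` K" by (rule closure_of_minimal[OF _ pKc])
      then have "{x \<in> carrier G. p x \<in> Q closure_of Y} \<subseteq> {x \<in> carrier G. p x \<in> p ` K}" by blast
      then show "{x \<in> carrier G. p x \<in> Q closure_of Y} \<subseteq> K" using satK by simp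
    qed
    have "Q closure_of Y \<subseteq> p ` carrier G" using closure_of_subset_topspace[of Q Y] Qtop by simp
    then show "openin Q (Q closure_of Y)" unfolding Qopen pre using Ko by blast
  qed
  define A where "A = {x \<in> carrier G. x \<otimes> x \<notin> N}"
  have AG: "A \<subseteq> carrier G" unfolding A_def by blast
  have sqc: "continuous_map T T (\<lambda>x. x \<otimes> x)" by (intro cont_mult cont_id)
  define KK where "KK = (\<lambda>W. {x \<in> carrier G. x \<otimes> x \<in> topspace T - W}) ` VV"
  have KKc: "countable KK" unfolding KK_def using VVc by simp
  have KKl: "Lindelof_space (subtopology T K)" if KK: "K \<in> KK" for K
  proof -
    obtain W where W: "W \<in> VV" "K = {x \<in> carrier G. x \<otimes> x \<in> topspace T - W}"
      using KK unfolding KK_def by blast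
    have "closedin T (topspace T - W)" using VVo W(1) by blast
    then have "closedin T K" unfolding W(2) by (rule closed_pre[OF sqc])
    then show ?thesis by (rule Lindelof_space_closedin_subtopology[OF L])
  qed
  have KKA: "\<Union>KK = A"
  proof (intro equalityI subsetI)
    fix x assume "x \<in> \<Union>KK"
    then obtain W where W: "W \<in> VV" "x \<in> carrier G" "x \<otimes> x \<notin> W" unfolding KK_def by blast
    then show "x \<in> A" unfolding A_def NVV by blast
  next
    fix x assume "x \<in> A"
    then have x: "x \<in> carrier G" "x \<otimes> x \<notin> \<Inter>VV" unfolding A_def NVV by auto
    then obtain W where W: "W \<in> VV" "x \<otimes> x \<notin> W" by blast
    have "x \<otimes> x \<in> topspace T" using x top by simp
    then show "x \<in> \<Union>KK" unfolding KK_def using W x by blast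
  qed
  have LA: "Lindelof_space (subtopology T A)"
    using Lindelof_space_Union[OF KKc KKl] KKA by simp
  have CR: "completely_regular_space T"
    using normal_imp_completely_regular_space[OF regular_Lindelof_imp_normal_space[OF regular L]] regular by blast
  have Ainv: "inv x \<noteq> x" if "x \<in> A" for x
  proof
    assume "inv x = x"
    then have "x \<otimes> x = \<one>" using that AG r_inv[of x] by auto
    then show False using that Nn.one_closed unfolding A_def by simp
  qed
  have oneA: "\<one> \<notin> T closure_of A" by (rule frolik[OF BD CR HS LA AG Ainv])
  define Ob where "Ob = topspace T - T closure_of A"
  have Obo: "openin T Ob" unfolding Ob_def by (rule openin_diff[OF openin_topspace closedin_closure_of])
  have oneOb: "\<one> \<in> Ob" unfolding Ob_def using oneA top by simp
  have AT: "A \<subseteq> topspace T" using AG top by simp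
  have Acl: "A \<subseteq> T closure_of A" by (rule closure_of_subset[OF AT])
  have Obsq: "x \<otimes> x \<in> N" if "x \<in> Ob" for x
  proof -
    have "x \<in> carrier G" "x \<notin> A" using that Acl top unfolding Ob_def by auto
    then show ?thesis unfolding A_def by blast
  qed
  have "\<one> \<otimes> \<one> \<in> Ob" using oneOb by simp
  then obtain V where V: "openin T V" "\<one> \<in> V" "\<forall>u\<in>V. \<forall>v\<in>V. u \<otimes> v \<in> Ob"
    using nbhd1[OF mcont Obo] by auto
  have VG: "V \<subseteq> carrier G" using open_subset[OF V(1)] .
  define H where "H = generate (G Mod N) (p ` V)"
  have pV: "p ` V \<subseteq> carrier (G Mod N)" unfolding carQ using VG by blast
  have Hsub: "subgroup H (G Mod N)" unfolding H_def by (rule group.generate_is_subgroup[OF grpQ pV])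
  have pVsq: "p u \<otimes>\<^bsub>G Mod N\<^esub> p u = \<one>\<^bsub>G Mod N\<^esub>" if "u \<in> V" for u
  proof -
    have uG: "u \<in> carrier G" using that VG by blast
    have "u \<otimes> \<one> \<in> Ob" using V that by blast
    then have "u \<otimes> u \<in> N" using Obsq uG by simp
    then show ?thesis using p5[OF uG uG] p4[of "u \<otimes> u"] uG by simp
  qed
  have pVcm: "a \<otimes>\<^bsub>G Mod N\<^esub> b = b \<otimes>\<^bsub>G Mod N\<^esub> a" if ab: "a \<in> p ` V" "b \<in> p ` V" for a b
  proof -
    obtain u v where uv: "u \<in> V" "v \<in> V" "a = p u" "b = p v" using ab by blast
    have uG: "u \<in> carrier G" and vG: "v \<in> carrier G" using uv VG by auto
    have "(u \<otimes> v) \<otimes> (u \<otimes> v) \<in> N" using Obsq V uv by blast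
    then have "p ((u \<otimes> v) \<otimes> (u \<otimes> v)) = N" using p4 uG vG by simp
    then have "(a \<otimes>\<^bsub>G Mod N\<^esub> b) \<otimes>\<^bsub>G Mod N\<^esub> (a \<otimes>\<^bsub>G Mod N\<^esub> b) = \<one>\<^bsub>G Mod N\<^esub>"
      using p5 uG vG uv by simp
    moreover have "a \<in> carrier (G Mod N)" "b \<in> carrier (G Mod N)" using pV ab by auto
    ultimately show ?thesis using group.comm_invol[OF grpQ] pVsq uv by blast
  qed
  have Hbool: "boolean_group ((G Mod N)\<lparr>carrier := H\<rparr>)"
    unfolding boolean_group_def
  proof
    fix x assume "x \<in> carrier ((G Mod N)\<lparr>carrier := H\<rparr>)"
    then have "x \<in> H" by simp
    then have "x \<otimes>\<^bsub>G Mod N\<^esub> x = \<one>\<^bsub>G Mod N\<^esub>"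
      unfolding H_def using group.gen_bool[OF grpQ pV pVcm] pVsq by blast
    then show "x \<otimes>\<^bsub>(G Mod N)\<lparr>carrier := H\<rparr>\<^esub> x = \<one>\<^bsub>(G Mod N)\<lparr>carrier := H\<rparr>\<^esub>" by simp
  qed
  define K0 where "K0 = {x \<in> carrier G. p x \<in> H}"
  have HQ: "H \<subseteq> p ` carrier G" using subgroup.subset[OF Hsub] carQ by simp
  have K0mul: "x \<otimes> y \<in> K0" if "x \<in> K0" "y \<in> K0" for x y
  proof -
    have c: "x \<in> carrier G" "y \<in> carrier G" using that unfolding K0_def by auto
    have "p x \<otimes>\<^bsub>G Mod N\<^esub> p y \<in> H" using subgroup.m_closed[OF Hsub] that unfolding K0_def by blast
    then show ?thesis using p5[OF c] c unfolding K0_def by simp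
  qed
  have VK0: "V \<subseteq> K0"
  proof
    fix v assume v: "v \<in> V"
    have "p v \<in> H" unfolding H_def using v by (blast intro: generate.incl)
    then show "v \<in> K0" using v VG unfolding K0_def by blast
  qed
  have K0o: "openin T K0"
  proof (subst openin_subopen, intro ballI)
    fix x assume x: "x \<in> K0"
    have xG: "x \<in> carrier G" using x unfolding K0_def by blast
    let ?O = "{z \<in> carrier G. inv x \<otimes> z \<in> V}"
    have "openin T ?O" using ltrans_open[OF V(1)] xG by simp
    moreover have "x \<in> ?O" using xG V by simp
    moreover have "?O \<subseteq> K0"
    proof
      fix z assume z: "z \<in> ?O"
      have "x \<otimes> (inv x \<otimes> z) \<in> K0" using K0mul x VK0 z by blast
      then show "z \<in> K0" using xG z by (simp add: m_assoc[symmetric])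
    qed
    ultimately show "\<exists>Ta. openin T Ta \<and> x \<in> Ta \<and> Ta \<subseteq> K0" by blast
  qed
  have K0c: "closedin T K0"
    unfolding closedin_def
  proof
    show "K0 \<subseteq> topspace T" using top unfolding K0_def by auto
    show "openin T (topspace T - K0)"
    proof (subst openin_subopen, intro ballI)
      fix y assume y: "y \<in> topspace T - K0"
      have yG: "y \<in> carrier G" using y top by simp
      let ?O = "{z \<in> carrier G. y \<otimes> inv z \<in> V}"
      have "openin T ?O" by (intro open_pre V cont_mult cont_const cont_inv cont_id yG)
      moreover have "y \<in> ?O" using yG V by simp
      moreover have "?O \<subseteq> topspace T - K0"
      proof
        fix z assume z: "z \<in> ?O"
        have zG: "z \<in> carrier G" using z by simp
        have "z \<notin> K0"
        proof
          assume "z \<in> K0"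
          then have "(y \<otimes> inv z) \<otimes> z \<in> K0" using K0mul VK0 z by blast
          then have "y \<in> K0" using yG zG by (simp add: m_assoc)
          then show False using y by blast
        qed
        then show "z \<in> topspace T - K0" using zG top by simp
      qed
      ultimately show "\<exists>Ta. openin T Ta \<and> y \<in> Ta \<and> Ta \<subseteq> topspace T - K0" by blast
    qed
  qed
  have Hopen: "openin Q H" unfolding Qopen using HQ K0o unfolding K0_def by blast
  have Hclosed: "closedin Q H" unfolding Qclosed using HQ K0c unfolding K0_def by blast
  have Hbd: "basically_disconnected (subtopology Q H)" by (rule bd_clopen_sub[OF bdQ Hclosed Hopen])
  show ?thesis unfolding Let_def Qdef using nd cpc Hsub Hopen Hbool Hbd by blast
qed

end


theorem theorem2:
  fixes G :: "('a, 'b) monoid_scheme" and T :: "'a topology"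
  assumes "topological_group G T"
    and "Lindelof_space T"
    and "Hausdorff_space T"
    and "basically_disconnected T"
  shows "P_space T \<or>
    (\<exists>N. N \<lhd> G \<and> closedin T N \<and>
       (let Q = quotient_group_topology G T N in
          \<not> discrete_space Q \<and>
          countable_pseudocharacter (G Mod N) Q \<and>
          (\<exists>H. subgroup H (G Mod N) \<and> openin Q H \<and>
               boolean_group ((G Mod N)\<lparr>carrier := H\<rparr>) \<and>
               basically_disconnected (subtopology Q H))))"
proof -
  interpret tgrp G T by (rule tgrpI[OF assms(1)])
  show ?thesis
  proof (cases "P_space T")
    case True then show ?thesis by simp
  next
    case False
    obtain N VV where NV: "N \<lhd> G" "closedin T N" "\<not> openin T N" "countable VV" "VV \<noteq> {}"
       "\<forall>W\<in>VV. openin T W" "N = \<Inter>VV" "\<forall>V\<in>VV. \<exists>W\<in>VV. \<forall>a\<in>W. \<forall>b\<in>W. a \<otimes>\<^bsub>G\<^esub> b \<in> V"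
      using exists_N[OF assms(2) False] by blast
    have "let Q = quotient_group_topology G T N in
          \<not> discrete_space Q \<and>
          countable_pseudocharacter (G Mod N) Q \<and>
          (\<exists>H. subgroup H (G Mod N) \<and> openin Q H \<and>
               boolean_group ((G Mod N)\<lparr>carrier := H\<rparr>) \<and>
               basically_disconnected (subtopology Q H))"
      by (rule main_quot[OF assms(2) assms(3) assms(4) NV])
    then show ?thesis using NV(1,2) by blast
  qed
qed

end
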